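(* Let $M$ and $N$ be non-trivial $0$-left cancellative monoids with zero. If $M$ and $N$ both admit least common multiples (respectively, are both finitely aligned, respectively, are both strongly finitely aligned), then $M*_0N$ is a $0$-left cancellative monoid that admits least common multiples (respectively, is finitely aligned, respectively, is strongly finitely aligned).
   Context: A monoid with zero is non-trivial if $0\neq1$; $0$-left cancellative: $st=sr\neq0\Rightarrow t=r$. The $0$-free product $M*_0N$ is the coproduct in the category of monoids with zero (equivalently the Rees quotient of the free product $M*N$ by the ideal generated by the zeros of $M$ and $N$). A monoid $T$ with zero admits least common multiples if for all $s,t\in T$ there is $r\in T$ with $sT\cap tT=rT$. $T$ is finitely aligned if for all $s,t\in T$ there is a finite set $R\subseteq T$ with $sT\cap tT=\bigcup_{r\in R}rT$. $T$ is strongly finitely aligned if for all $s,t\in T$ there is a finite (possibly empty) $B\subseteq T\setminus\{0\}$ with $sT\cap tT=\bigcup_{b\in B}bT$ (interpreted as $\{0\}$ if $B=\emptyset$) and $bT\cap b'T=\{0\}$ for distinct $b,b'\in B$. *)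

theory Defs
  imports Main
begin

definition monoid0 :: "'m set \<Rightarrow> ('m \<Rightarrow> 'm \<Rightarrow> 'm) \<Rightarrow> 'm \<Rightarrow> 'm \<Rightarrow> bool" where
  "monoid0 S f e z \<longleftrightarrow>
     e \<in> S \<and> z \<in> S \<and> (\<forall>x\<in>S. \<forall>y\<in>S. f x y \<in> S) \<and>
     (\<forall>x\<in>S. \<forall>y\<in>S. \<forall>w\<in>S. f (f x y) w = f x (f y w)) \<and>
     (\<forall>x\<in>S. f e x = x \<and> f x e = x) \<and>
     (\<forall>x\<in>S. f z x = z \<and> f x z = z)"

definition rideal :: "'m set \<Rightarrow> ('m \<Rightarrow> 'm \<Rightarrow> 'm) \<Rightarrow> 'm \<Rightarrow> 'm set" where
  "rideal S f s = {f s t | t. t \<in> S}"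

definition zero_left_cancellative :: "'m set \<Rightarrow> ('m \<Rightarrow> 'm \<Rightarrow> 'm) \<Rightarrow> 'm \<Rightarrow> bool" where
  "zero_left_cancellative S f z \<longleftrightarrow>
     (\<forall>s\<in>S. \<forall>t\<in>S. \<forall>r\<in>S. f s t = f s r \<and> f s t \<noteq> z \<longrightarrow> t = r)"

definition admits_lcm :: "'m set \<Rightarrow> ('m \<Rightarrow> 'm \<Rightarrow> 'm) \<Rightarrow> bool" where
  "admits_lcm S f \<longleftrightarrow>
     (\<forall>s\<in>S. \<forall>t\<in>S. \<exists>r\<in>S. rideal S f s \<inter> rideal S f t = rideal S f r)"

definition finitely_aligned :: "'m set \<Rightarrow> ('m \<Rightarrow> 'm \<Rightarrow> 'm) \<Rightarrow> bool" where
  "finitely_aligned S f \<longleftrightarrow>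
     (\<forall>s\<in>S. \<forall>t\<in>S. \<exists>R. R \<subseteq> S \<and> finite R \<and>
        rideal S f s \<inter> rideal S f t = (\<Union>r\<in>R. rideal S f r))"

definition strongly_finitely_aligned :: "'m set \<Rightarrow> ('m \<Rightarrow> 'm \<Rightarrow> 'm) \<Rightarrow> 'm \<Rightarrow> bool" where
  "strongly_finitely_aligned S f z \<longleftrightarrow>
     (\<forall>s\<in>S. \<forall>t\<in>S. \<exists>B. B \<subseteq> S - {z} \<and> finite B \<and>
        rideal S f s \<inter> rideal S f t = (if B = {} then {z} else (\<Union>b\<in>B. rideal S f b)) \<and>
        (\<forall>b\<in>B. \<forall>b'\<in>B. b \<noteq> b' \<longrightarrow> rideal S f b \<inter> rideal S f b' = {z}))"

text \<open>Elements: the zero, or a reduced word: an alternating word of letters from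
  M - {0,1} and N - {0,1} (the empty word is the identity).\<close>
datatype ('a, 'b) zfp = Zero | Word "('a + 'b) list"

fun letter_ok :: "('a::{monoid_mult,mult_zero} + 'b::{monoid_mult,mult_zero}) \<Rightarrow> bool" where
  "letter_ok (Inl a) = (a \<noteq> 0 \<and> a \<noteq> 1)"
| "letter_ok (Inr b) = (b \<noteq> 0 \<and> b \<noteq> 1)"

fun same_side :: "('a + 'b) \<Rightarrow> ('a + 'b) \<Rightarrow> bool" where
  "same_side (Inl _) (Inl _) = True"
| "same_side (Inr _) (Inr _) = True"
| "same_side _ _ = False"

definition reduced :: "('a::{monoid_mult,mult_zero} + 'b::{monoid_mult,mult_zero}) list \<Rightarrow> bool" where
  "reduced w \<longleftrightarrow> (\<forall>x\<in>set w. letter_ok x) \<and>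
     (\<forall>i. Suc i < length w \<longrightarrow> \<not> same_side (w ! i) (w ! Suc i))"

definition zfp_carrier :: "('a::{monoid_mult,mult_zero}, 'b::{monoid_mult,mult_zero}) zfp set" where
  "zfp_carrier = insert Zero {Word w | w. reduced w}"

fun zpush :: "('a::{monoid_mult,mult_zero} + 'b::{monoid_mult,mult_zero}) \<Rightarrow> ('a, 'b) zfp \<Rightarrow> ('a, 'b) zfp" where
  "zpush x Zero = Zero"
| "zpush (Inl a) (Word w) =
     (if a = 0 then Zero else if a = 1 then Word w else
      (case w of
         Inl b # w' \<Rightarrow> (if a * b = 0 then Zero else if a * b = 1 then Word w' else Word (Inl (a * b) # w'))
       | _ \<Rightarrow> Word (Inl a # w)))"
| "zpush (Inr a) (Word w) =
     (if a = 0 then Zero else if a = 1 then Word w else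
      (case w of
         Inr b # w' \<Rightarrow> (if a * b = 0 then Zero else if a * b = 1 then Word w' else Word (Inr (a * b) # w'))
       | _ \<Rightarrow> Word (Inr a # w)))"

fun zfp_mult :: "('a::{monoid_mult,mult_zero}, 'b::{monoid_mult,mult_zero}) zfp \<Rightarrow> ('a, 'b) zfp \<Rightarrow> ('a, 'b) zfp" where
  "zfp_mult Zero v = Zero"
| "zfp_mult (Word u) v = foldr zpush u v"

definition zfp_one :: "('a, 'b) zfp" where "zfp_one = Word []"

end

theory Submission
  imports Defs
begin


lemma same_side_iff[simp]: "same_side x y \<longleftrightarrow> isl x = isl y"
  by (cases x; cases y) auto

lemma reduced_Nil[simp]: "reduced []" by (simp add: reduced_def)
lemma reduced_single[simp]: "reduced [x] = letter_ok x" by (simp add: reduced_def)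
lemma reduced_Cons2[simp]: "reduced (x#y#w) = (letter_ok x \<and> \<not> same_side x y \<and> reduced (y#w))"
proof -
  have "(\<forall>i. Suc i < length (x#y#w) \<longrightarrow> \<not> same_side ((x#y#w) ! i) ((x#y#w) ! Suc i)) \<longleftrightarrow>
        \<not> same_side x y \<and> (\<forall>i. Suc i < length (y#w) \<longrightarrow> \<not> same_side ((y#w) ! i) ((y#w) ! Suc i))"
    (is "?L \<longleftrightarrow> ?R")
  proof
    assume L: ?L
    show ?R
    proof
      show "\<not> same_side x y" using L[rule_format, of 0] by simp
      show "\<forall>i. Suc i < length (y#w) \<longrightarrow> \<not> same_side ((y#w) ! i) ((y#w) ! Suc i)"
        using L by (metis Suc_less_eq length_Cons nth_Cons_Suc)
    qed
  next
    assume R: ?R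
    show ?L
    proof (intro allI impI)
      fix i assume "Suc i < length (x#y#w)"
      then show "\<not> same_side ((x#y#w) ! i) ((x#y#w) ! Suc i)"
        using R by (cases i) auto
    qed
  qed
  then show ?thesis by (auto simp: reduced_def)
qed

lemma reduced_Cons: "reduced (x#w) \<longleftrightarrow> letter_ok x \<and> reduced w \<and> (w \<noteq> [] \<longrightarrow> \<not> same_side x (hd w))"
  by (cases w) auto

lemma reduced_append: "reduced (u @ v) \<longleftrightarrow> reduced u \<and> reduced v \<and> (u \<noteq> [] \<longrightarrow> v \<noteq> [] \<longrightarrow> \<not> same_side (last u) (hd v))"
proof (induction u)
  case Nil then show ?case by simp
next
  case (Cons x u)
  then show ?case by (cases u; cases v) (auto simp: reduced_Cons)
qed

lemma Word_in_carrier[simp]: "Word w \<in> zfp_carrier \<longleftrightarrow> reduced w"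
  by (auto simp: zfp_carrier_def)
lemma Zero_in_carrier[simp]: "Zero \<in> zfp_carrier"
  by (auto simp: zfp_carrier_def)
lemma carrier_cases: "x \<in> zfp_carrier \<Longrightarrow> x = Zero \<or> (\<exists>w. x = Word w \<and> reduced w)"
  by (auto simp: zfp_carrier_def)

lemma zpush_carrier: "t \<in> zfp_carrier \<Longrightarrow> zpush x t \<in> zfp_carrier"
proof -
  assume t: "t \<in> zfp_carrier"
  show ?thesis
  proof (cases t)
    case Zero then show ?thesis by simp
  next
    case (Word w)
    with t have r: "reduced w" by simp
    show ?thesis
    proof (cases x)
      case (Inl a)
      show ?thesis
      proof (cases w)
        case Nil then show ?thesis using Word Inl by auto
      next
        case (Cons y w')
        then show ?thesis using Word Inl r by (cases y) (auto simp: reduced_Cons)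
      qed
    next
      case (Inr a)
      show ?thesis
      proof (cases w)
        case Nil then show ?thesis using Word Inr by auto
      next
        case (Cons y w')
        then show ?thesis using Word Inr r by (cases y) (auto simp: reduced_Cons)
      qed
    qed
  qed
qed

lemma foldr_zpush_carrier: "t \<in> zfp_carrier \<Longrightarrow> foldr zpush u t \<in> zfp_carrier"
  by (induction u) (auto intro: zpush_carrier)

lemma zfp_mult_carrier: "x \<in> zfp_carrier \<Longrightarrow> y \<in> zfp_carrier \<Longrightarrow> zfp_mult x y \<in> zfp_carrier"
  by (cases x) (auto intro: foldr_zpush_carrier)


lemma assoc1: "(a::'a::monoid_mult) * b = 1 \<Longrightarrow> a * (b * c) = c"
  by (metis mult.assoc mult_1_left)

lemma zpush_Inl_Inl:
  assumes x: "x \<in> zfp_carrier"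
  shows "zpush (Inl a) (zpush (Inl b) x) = zpush (Inl (a*b)) x"
proof (cases x)
  case Zero then show ?thesis by simp
next
  case (Word w)
  with x have r: "reduced w" by simp
  show ?thesis
  proof (cases w)
    case Nil then show ?thesis using Word by auto
  next
    case (Cons y w')
    show ?thesis
    proof (cases y)
      case (Inl c)
      have c: "c \<noteq> 0" "c \<noteq> 1" and w': "reduced w'" "w' \<noteq> [] \<longrightarrow> \<not> isl (hd w')"
        using r Cons Inl by (auto simp: reduced_Cons)
      have hd: "\<And>d w''. w' \<noteq> Inl d # w''" using w' by auto
      have h1: "a*b = 0 \<Longrightarrow> a*(b*c) = 0" by (metis mult.assoc mult_zero_left)
      have h2: "a*b = 1 \<Longrightarrow> a*(b*c) = c" by (rule assoc1)
      have h3: "a*b = 1 \<Longrightarrow> b*c = 1 \<Longrightarrow> a = c" by (metis assoc1 mult.right_neutral)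
      have h4: "a*b = 1 \<Longrightarrow> b*c = 0 \<Longrightarrow> c = 0" by (metis assoc1 mult_zero_right)
      show ?thesis using Word Cons Inl c hd h1 h2 h3 h4
        apply (cases w')
        apply (auto simp: mult.assoc assoc1 split: sum.split list.split)
        done
    next
      case (Inr c)
      then show ?thesis using Word Cons by (auto simp: mult.assoc)
    qed
  qed
qed

lemma zpush_Inr_Inr:
  assumes x: "x \<in> zfp_carrier"
  shows "zpush (Inr a) (zpush (Inr b) x) = zpush (Inr (a*b)) x"
proof (cases x)
  case Zero then show ?thesis by simp
next
  case (Word w)
  with x have r: "reduced w" by simp
  show ?thesis
  proof (cases w)
    case Nil then show ?thesis using Word by auto
  next
    case (Cons y w')
    show ?thesis
    proof (cases y)
      case (Inr c)
      have c: "c \<noteq> 0" "c \<noteq> 1" and w': "reduced w'" "w' \<noteq> [] \<longrightarrow> isl (hd w')"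
        using r Cons Inr by (auto simp: reduced_Cons)
      have hd: "\<And>d w''. w' \<noteq> Inr d # w''" using w' by auto
      have h1: "a*b = 0 \<Longrightarrow> a*(b*c) = 0" by (metis mult.assoc mult_zero_left)
      have h2: "a*b = 1 \<Longrightarrow> a*(b*c) = c" by (rule assoc1)
      have h3: "a*b = 1 \<Longrightarrow> b*c = 1 \<Longrightarrow> a = c" by (metis assoc1 mult.right_neutral)
      have h4: "a*b = 1 \<Longrightarrow> b*c = 0 \<Longrightarrow> c = 0" by (metis assoc1 mult_zero_right)
      show ?thesis using Word Cons Inr c hd h1 h2 h3 h4
        apply (cases w')
        apply (auto simp: mult.assoc assoc1 split: sum.split list.split)
        done
    next
      case (Inl c)
      then show ?thesis using Word Cons by (auto simp: mult.assoc)
    qed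
  qed
qed

lemma zpush_0[simp]: "zpush (Inl 0) z = Zero" "zpush (Inr 0) z = Zero"
  by (cases z; simp)+
lemma zpush_1[simp]: "(1::'a::{monoid_mult,mult_zero}) \<noteq> 0 \<Longrightarrow> zpush (Inl 1) z = (z::('a,'b::{monoid_mult,mult_zero}) zfp)"
  "(1::'b) \<noteq> 0 \<Longrightarrow> zpush (Inr 1) z = (z::('a,'b) zfp)"
  by (cases z; simp)+

lemma zfp_mult_zpush:
  assumes y: "y \<in> zfp_carrier" and z: "z \<in> zfp_carrier"
  shows "zfp_mult (zpush x y) z = zpush x (zfp_mult y z)"
proof (cases y)
  case Zero then show ?thesis by simp
next
  case (Word w)
  with y have r: "reduced w" by simp
  have fz: "foldr zpush w' z \<in> zfp_carrier" for w' using z by (rule foldr_zpush_carrier)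
  show ?thesis
  proof (cases x)
    case (Inl a)
    show ?thesis
    proof (cases w)
      case Nil then show ?thesis using Word Inl by auto
    next
      case (Cons y' w')
      show ?thesis
      proof (cases y')
        fix b assume Inl': "y' = Inl b"
        show ?thesis using Word Cons Inl Inl' zpush_Inl_Inl[OF fz[of w'], of a b]
          by auto
      next
        fix b assume Inr': "y' = Inr b"
        show ?thesis using Word Cons Inl Inr' by auto
      qed
    qed
  next
    case (Inr a)
    show ?thesis
    proof (cases w)
      case Nil then show ?thesis using Word Inr by auto
    next
      case (Cons y' w')
      show ?thesis
      proof (cases y')
        fix b assume Inr': "y' = Inr b"
        show ?thesis using Word Cons Inr Inr' zpush_Inr_Inr[OF fz[of w'], of a b]
          by auto
      next
        fix b assume Inl': "y' = Inl b"
        show ?thesis using Word Cons Inr Inl' by auto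
      qed
    qed
  qed
qed

lemma zfp_mult_foldr:
  assumes y: "y \<in> zfp_carrier" and z: "z \<in> zfp_carrier"
  shows "zfp_mult (foldr zpush u y) z = foldr zpush u (zfp_mult y z)"
  using y by (induction u) (auto simp: zfp_mult_zpush[OF _ z] foldr_zpush_carrier)

lemma zfp_assoc:
  assumes "x \<in> zfp_carrier" "y \<in> zfp_carrier" "z \<in> zfp_carrier"
  shows "zfp_mult (zfp_mult x y) z = zfp_mult x (zfp_mult y z)"
  using assms by (cases x) (auto simp: zfp_mult_foldr)

lemma zpush_Word_cons:
  assumes "letter_ok x" "w \<noteq> [] \<Longrightarrow> isl x \<noteq> isl (hd w)"
  shows "zpush x (Word w) = Word (x # w)"
proof (cases w)
  case Nil then show ?thesis using assms by (cases x) auto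
next
  case (Cons y w')
  then show ?thesis using assms by (cases x; cases y) auto
qed

lemma foldr_zpush_Word:
  "reduced (p @ v) \<Longrightarrow> foldr zpush p (Word v) = Word (p @ v)"
proof (induction p)
  case Nil then show ?case by simp
next
  case (Cons x p)
  then have r: "reduced (p @ v)" and lx: "letter_ok x"
    and h: "p @ v \<noteq> [] \<Longrightarrow> isl x \<noteq> isl (hd (p @ v))"
    by (auto simp: reduced_Cons)
  have IH: "foldr zpush p (Word v) = Word (p @ v)" using Cons.IH r .
  show ?case using zpush_Word_cons[OF lx h] by (simp add: IH)
qed

lemma foldr_zpush_Zero[simp]: "foldr zpush u Zero = Zero"
  by (induction u) auto

lemma zfp_monoid0: "monoid0 zfp_carrier zfp_mult zfp_one Zero"
  unfolding monoid0_def
proof (intro conjI ballI)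
  fix x assume x: "x \<in> zfp_carrier"
  show "zfp_mult zfp_one x = x" by (simp add: zfp_one_def)
  show "zfp_mult x zfp_one = x" using x foldr_zpush_Word[of _ "[]"]
    by (cases x) (auto simp: zfp_one_def)
  show "zfp_mult Zero x = Zero" by simp
  show "zfp_mult x Zero = Zero" by (cases x) auto
qed (auto simp: zfp_one_def zfp_mult_carrier zfp_assoc)




lemma zlcD: "zero_left_cancellative (UNIV::'a set) (*) (0::'a::{monoid_mult,mult_zero}) \<Longrightarrow>
   (s::'a) * t = s * r \<Longrightarrow> s * t \<noteq> 0 \<Longrightarrow> t = r"
  unfolding zero_left_cancellative_def by blast

lemma zpush_inj_Inl:
  assumes zlc: "zero_left_cancellative (UNIV::'a set) (*) (0::'a::{monoid_mult,mult_zero})"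
    and a: "a \<noteq> 0" "a \<noteq> 1"
    and t: "t \<in> zfp_carrier" and r: "r \<in> zfp_carrier"
    and eq: "zpush (Inl a) t = zpush (Inl a) (r::('a,'b::{monoid_mult,mult_zero}) zfp)"
    and nz: "zpush (Inl a) t \<noteq> Zero"
  shows "t = r"
proof -
  have canc: "\<And>b c. a * b = a * c \<Longrightarrow> a * b \<noteq> 0 \<Longrightarrow> b = c" using zlcD[OF zlc] by blast
  have ca1: "\<And>b. a * b = a \<Longrightarrow> b = 1" using canc a by (metis mult_1_right)
  obtain w where tw: "t = Word w" and rw: "reduced w" using t nz carrier_cases by fastforce
  obtain v where rv: "r = Word v" and rrv: "reduced v" using r nz eq carrier_cases by fastforce
  have hw: "\<And>x w'. w = x # w' \<Longrightarrow> letter_ok x \<and> reduced w' \<and> (w' \<noteq> [] \<longrightarrow> isl x \<noteq> isl (hd w'))"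
    using rw by (auto simp: reduced_Cons)
  have hv: "\<And>x w'. v = x # w' \<Longrightarrow> letter_ok x \<and> reduced w' \<and> (w' \<noteq> [] \<longrightarrow> isl x \<noteq> isl (hd w'))"
    using rrv by (auto simp: reduced_Cons)
  show ?thesis
  proof (cases "\<exists>b w'. w = Inl b # w'")
    case True
    then obtain b w' where wb: "w = Inl b # w'" by blast
    have b: "b \<noteq> 0" "b \<noteq> 1" and w': "w' \<noteq> [] \<longrightarrow> \<not> isl (hd w')" using hw[OF wb] by auto
    show ?thesis
    proof (cases "\<exists>c v'. v = Inl c # v'")
      case True
      then obtain c v' where vc: "v = Inl c # v'" by blast
      have c: "c \<noteq> 0" "c \<noteq> 1" and v': "v' \<noteq> [] \<longrightarrow> \<not> isl (hd v')" using hv[OF vc] by auto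
      have "a * b = a * c \<and> w' = v'"
      proof (cases "a * b = 1"; cases "a * c = 1")
      qed (use eq nz tw rv wb vc a w' v' in \<open>auto split: if_splits\<close>)
      then show ?thesis using canc nz tw rv wb vc a by (auto split: if_splits)
    next
      case False
      then have "v = [] \<or> (\<exists>c v'. v = Inr c # v')" by (metis list.exhaust sum.exhaust)
      then show ?thesis using eq nz tw rv wb a w' b ca1
        by (auto split: if_splits)
    qed
  next
    case False
    then have wc: "w = [] \<or> (\<exists>c w'. w = Inr c # w')" by (metis list.exhaust sum.exhaust)
    show ?thesis
    proof (cases "\<exists>c v'. v = Inl c # v'")
      case True
      then obtain c v' where vc: "v = Inl c # v'" by blast
      have c: "c \<noteq> 0" "c \<noteq> 1" and v': "v' \<noteq> [] \<longrightarrow> \<not> isl (hd v')" using hv[OF vc] by auto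
      show ?thesis using eq nz tw rv wc a v' c ca1 vc by (auto split: if_splits)
    next
      case False
      then have "v = [] \<or> (\<exists>c v'. v = Inr c # v')" by (metis list.exhaust sum.exhaust)
      then show ?thesis using eq nz tw rv wc a by auto
    qed
  qed
qed

lemma zpush_inj_Inr:
  assumes zlc: "zero_left_cancellative (UNIV::'b set) (*) (0::'b::{monoid_mult,mult_zero})"
    and a: "a \<noteq> 0" "a \<noteq> 1"
    and t: "t \<in> zfp_carrier" and r: "r \<in> zfp_carrier"
    and eq: "zpush (Inr a) t = zpush (Inr a) (r::('a::{monoid_mult,mult_zero},'b) zfp)"
    and nz: "zpush (Inr a) t \<noteq> Zero"
  shows "t = r"
proof -
  have canc: "\<And>b c. a * b = a * c \<Longrightarrow> a * b \<noteq> 0 \<Longrightarrow> b = c" using zlcD[OF zlc] by blast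
  have ca1: "\<And>b. a * b = a \<Longrightarrow> b = 1" using canc a by (metis mult_1_right)
  obtain w where tw: "t = Word w" and rw: "reduced w" using t nz carrier_cases by fastforce
  obtain v where rv: "r = Word v" and rrv: "reduced v" using r nz eq carrier_cases by fastforce
  have hw: "\<And>x w'. w = x # w' \<Longrightarrow> letter_ok x \<and> reduced w' \<and> (w' \<noteq> [] \<longrightarrow> isl x \<noteq> isl (hd w'))"
    using rw by (auto simp: reduced_Cons)
  have hv: "\<And>x w'. v = x # w' \<Longrightarrow> letter_ok x \<and> reduced w' \<and> (w' \<noteq> [] \<longrightarrow> isl x \<noteq> isl (hd w'))"
    using rrv by (auto simp: reduced_Cons)
  show ?thesis
  proof (cases "\<exists>b w'. w = Inr b # w'")
    case True
    then obtain b w' where wb: "w = Inr b # w'" by blast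
    have b: "b \<noteq> 0" "b \<noteq> 1" and w': "w' \<noteq> [] \<longrightarrow> isl (hd w')" using hw[OF wb] by auto
    show ?thesis
    proof (cases "\<exists>c v'. v = Inr c # v'")
      case True
      then obtain c v' where vc: "v = Inr c # v'" by blast
      have c: "c \<noteq> 0" "c \<noteq> 1" and v': "v' \<noteq> [] \<longrightarrow> isl (hd v')" using hv[OF vc] by auto
      have "a * b = a * c \<and> w' = v'"
      proof (cases "a * b = 1"; cases "a * c = 1")
      qed (use eq nz tw rv wb vc a w' v' in \<open>auto split: if_splits\<close>)
      then show ?thesis using canc nz tw rv wb vc a by (auto split: if_splits)
    next
      case False
      then have "v = [] \<or> (\<exists>c v'. v = Inl c # v')" by (metis list.exhaust sum.exhaust)
      then show ?thesis using eq nz tw rv wb a w' b ca1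
        by (auto split: if_splits)
    qed
  next
    case False
    then have wc: "w = [] \<or> (\<exists>c w'. w = Inl c # w')" by (metis list.exhaust sum.exhaust)
    show ?thesis
    proof (cases "\<exists>c v'. v = Inr c # v'")
      case True
      then obtain c v' where vc: "v = Inr c # v'" by blast
      have c: "c \<noteq> 0" "c \<noteq> 1" and v': "v' \<noteq> [] \<longrightarrow> isl (hd v')" using hv[OF vc] by auto
      show ?thesis using eq nz tw rv wc a v' c ca1 vc by (auto split: if_splits)
    next
      case False
      then have "v = [] \<or> (\<exists>c v'. v = Inl c # v')" by (metis list.exhaust sum.exhaust)
      then show ?thesis using eq nz tw rv wc a by auto
    qed
  qed
qed

lemma zfp_zlc:
  assumes zlcM: "zero_left_cancellative (UNIV::'a set) (*) (0::'a::{monoid_mult,mult_zero})"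
    and zlcN: "zero_left_cancellative (UNIV::'b set) (*) (0::'b::{monoid_mult,mult_zero})"
  shows "zero_left_cancellative (zfp_carrier::('a,'b) zfp set) zfp_mult Zero"
proof -
  have key: "\<And>t r. reduced u \<Longrightarrow> t \<in> zfp_carrier \<Longrightarrow> r \<in> zfp_carrier \<Longrightarrow>
     foldr zpush u t = foldr zpush u (r::('a,'b) zfp) \<Longrightarrow> foldr zpush u t \<noteq> Zero \<Longrightarrow> t = r" for u
  proof (induction u)
    case Nil then show ?case by simp
  next
    case (Cons x u)
    have ru: "reduced u" and lx: "letter_ok x" using Cons.prems(1) by (auto simp: reduced_Cons)
    have ct: "foldr zpush u t \<in> zfp_carrier" "foldr zpush u r \<in> zfp_carrier"
      using Cons.prems by (auto intro: foldr_zpush_carrier)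
    have e: "zpush x (foldr zpush u t) = zpush x (foldr zpush u r)"
      and nz: "zpush x (foldr zpush u t) \<noteq> Zero" using Cons.prems by auto
    have "foldr zpush u t = foldr zpush u r"
    proof (cases x)
      case (Inl a) then show ?thesis using zpush_inj_Inl[OF zlcM _ _ ct e[unfolded Inl] nz[unfolded Inl]] lx by auto
    next
      case (Inr a) then show ?thesis using zpush_inj_Inr[OF zlcN _ _ ct e[unfolded Inr] nz[unfolded Inr]] lx by auto
    qed
    moreover have "foldr zpush u t \<noteq> Zero" using nz by auto
    ultimately show ?case using Cons.IH[OF ru Cons.prems(2,3)] by blast
  qed
  show ?thesis unfolding zero_left_cancellative_def
  proof (intro ballI impI)
    fix s t r :: "('a,'b) zfp"
    assume s: "s \<in> zfp_carrier" and t: "t \<in> zfp_carrier" and r: "r \<in> zfp_carrier"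
      and h: "zfp_mult s t = zfp_mult s r \<and> zfp_mult s t \<noteq> Zero"
    then obtain u where "s = Word u" "reduced u" using carrier_cases[OF s] by auto
    then show "t = r" using key[OF _ t r] h by auto
  qed
qed




lemma rideal_UNIV_iff: "x \<in> rideal UNIV f a \<longleftrightarrow> (\<exists>t. x = f a t)"
  by (auto simp: rideal_def)

fun lideal :: "('a::{monoid_mult,mult_zero} + 'b::{monoid_mult,mult_zero}) \<Rightarrow> ('a + 'b) set" where
  "lideal (Inl a) = Inl ` rideal UNIV (*) a"
| "lideal (Inr b) = Inr ` rideal UNIV (*) b"

fun unitl :: "('a::{monoid_mult,mult_zero} + 'b::{monoid_mult,mult_zero}) \<Rightarrow> bool" where
  "unitl (Inl a) = (\<exists>c. a * c = 1)"
| "unitl (Inr b) = (\<exists>c. b * c = 1)"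

definition F :: "('a::{monoid_mult,mult_zero} + 'b::{monoid_mult,mult_zero}) list \<Rightarrow> ('a + 'b) set \<Rightarrow> ('a,'b) zfp set" where
  "F p C = insert Zero {Word (p @ z # r) | z r. z \<in> C \<and> reduced (p @ z # r)}"

abbreviation rid :: "('a::{monoid_mult,mult_zero},'b::{monoid_mult,mult_zero}) zfp \<Rightarrow> ('a,'b) zfp set" where
  "rid s \<equiv> rideal zfp_carrier zfp_mult s"

lemma Inl_img[simp]: "Inl x \<in> Inl ` S \<longleftrightarrow> x \<in> S" by auto
lemma Inr_img[simp]: "Inr x \<in> Inr ` S \<longleftrightarrow> x \<in> S" by auto
lemma prod_in_rideal[simp]: "a * b \<in> rideal UNIV (*) a"
  unfolding rideal_UNIV_iff by blast

lemma lideal_isl: "z \<in> lideal x \<Longrightarrow> isl z = isl x"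
  by (cases x) auto

lemma rid_Zero: "rid Zero = {Zero}"
  by (auto simp: rideal_def) (use Zero_in_carrier in blast)

lemma self_in_rideal[simp]: "(a::'a::monoid_mult) \<in> rideal UNIV (*) a"
  unfolding rideal_UNIV_iff by (metis mult_1_right)

lemma rid_one: "rid (Word []) = zfp_carrier"
  by (auto simp: rideal_def)

lemma rid_sub: "s \<in> zfp_carrier \<Longrightarrow> rid s \<subseteq> zfp_carrier"
  by (auto simp: rideal_def zfp_mult_carrier)

lemma Zero_in_rid: "s \<in> zfp_carrier \<Longrightarrow> Zero \<in> rid s"
  unfolding rideal_def by (cases s) (auto intro!: exI[of _ Zero])

lemma rid_mult_sub: "s \<in> zfp_carrier \<Longrightarrow> u \<in> zfp_carrier \<Longrightarrow> rid (zfp_mult s u) \<subseteq> rid s"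
  by (auto simp: rideal_def zfp_assoc zfp_mult_carrier)

lemma A1:
  assumes lx: "letter_ok x" and nu: "\<not> unitl x" and t: "t \<in> zfp_carrier" and nz: "zpush x t \<noteq> Zero"
  shows "\<exists>z r. zpush x t = Word (z # r) \<and> z \<in> lideal x \<and> reduced (z # r)"
proof -
  obtain w where tw: "t = Word w" and rw: "reduced w" using t nz carrier_cases by fastforce
  show ?thesis
  proof (cases x)
    case (Inl a)
    show ?thesis
    proof (cases w)
      case Nil then show ?thesis using Inl tw lx
        by (auto intro!: imageI)
    next
      case (Cons y w')
      have w': "reduced w'" "w' \<noteq> [] \<longrightarrow> isl y \<noteq> isl (hd w')" "letter_ok y"
        using rw Cons by (auto simp: reduced_Cons)
      show ?thesis
      proof (cases y)
        case (Inl b)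
        then show ?thesis using \<open>x = Inl a\<close> tw Cons w' nz nu
          by (auto simp: rideal_UNIV_iff reduced_Cons split: if_splits)
      next
        case (Inr b)
        then show ?thesis using \<open>x = Inl a\<close> tw Cons w' nz nu lx rw
          by (auto intro!: imageI)
      qed
    qed
  next
    case (Inr a)
    show ?thesis
    proof (cases w)
      case Nil then show ?thesis using Inr tw lx
        by (auto intro!: imageI)
    next
      case (Cons y w')
      have w': "reduced w'" "w' \<noteq> [] \<longrightarrow> isl y \<noteq> isl (hd w')" "letter_ok y"
        using rw Cons by (auto simp: reduced_Cons)
      show ?thesis
      proof (cases y)
        case (Inr b)
        then show ?thesis using \<open>x = Inr a\<close> tw Cons w' nz nu
          by (auto simp: rideal_UNIV_iff reduced_Cons split: if_splits)
      next
        case (Inl b)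
        then show ?thesis using \<open>x = Inr a\<close> tw Cons w' nz nu lx rw
          by (auto intro!: imageI)
      qed
    qed
  qed
qed

lemma reduced_snoc_swap:
  assumes "reduced (p @ [x])" "reduced (z # r)" "isl z = isl x"
  shows "reduced (p @ z # r)"
  using assms by (auto simp: reduced_append)

lemma lemA:
  assumes r: "reduced (p @ [x])" and nu: "\<not> unitl x"
  shows "rid (Word (p @ [x])) = F p (lideal x)"
proof
  have lx: "letter_ok x" using r by (auto simp: reduced_append)
  show "rid (Word (p @ [x])) \<subseteq> F p (lideal x)"
  proof
    fix e assume "e \<in> rid (Word (p @ [x]))"
    then obtain t where t: "t \<in> zfp_carrier" and e: "e = foldr zpush p (zpush x t)"
      by (auto simp: rideal_def)
    show "e \<in> F p (lideal x)"
    proof (cases "zpush x t = Zero")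
      case True then show ?thesis using e by (simp add: F_def)
    next
      case False
      then obtain z r' where zr: "zpush x t = Word (z # r')" "z \<in> lideal x" "reduced (z # r')"
        using A1[OF lx nu t] by blast
      have rr: "reduced (p @ z # r')" using reduced_snoc_swap[OF r zr(3) lideal_isl[OF zr(2)]] .
      have "e = Word (p @ z # r')" using e zr(1) foldr_zpush_Word[OF rr] by simp
      then show ?thesis using zr rr by (auto simp: F_def)
    qed
  qed
  show "F p (lideal x) \<subseteq> rid (Word (p @ [x]))"
  proof
    fix e assume "e \<in> F p (lideal x)"
    then consider "e = Zero" | z r' where "e = Word (p @ z # r')" "z \<in> lideal x" "reduced (p @ z # r')"
      by (auto simp: F_def)
    then show "e \<in> rid (Word (p @ [x]))"
    proof cases
      case 1 then show ?thesis using Zero_in_rid[of "Word (p @ [x])"] r by simp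
    next
      case 2
      have rzr: "reduced (z # r')" using 2(3) by (auto simp: reduced_append)
      have hz: "letter_ok z" "r' \<noteq> [] \<Longrightarrow> isl z \<noteq> isl (hd r')" "reduced r'" using rzr by (auto simp: reduced_Cons)
      have iz: "isl z = isl x" using lideal_isl[OF 2(2)] .
      have "\<exists>t\<in>zfp_carrier. zpush x t = Word (z # r')"
      proof (cases x)
        case (Inl a)
        then obtain m where zm: "z = Inl (a * m)" using 2(2) by (auto simp: rideal_UNIV_iff)
        show ?thesis
        proof (cases "m = 1")
          case True
          then have "z = x" using zm Inl by simp
          then show ?thesis using zpush_Word_cons[OF lx, of r'] hz by (intro bexI[of _ "Word r'"]) auto
        next
          case False
          have m0: "m \<noteq> 0" using hz(1) zm by auto
          have am: "a * m \<noteq> 1" using nu Inl by auto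
          have "reduced (Inl m # r')" using hz zm m0 False by (auto simp: reduced_Cons)
          then show ?thesis using Inl zm hz(1) am lx
            by (intro bexI[of _ "Word (Inl m # r')"]) auto
        qed
      next
        case (Inr a)
        then obtain m where zm: "z = Inr (a * m)" using 2(2) by (auto simp: rideal_UNIV_iff)
        show ?thesis
        proof (cases "m = 1")
          case True
          then have "z = x" using zm Inr by simp
          then show ?thesis using zpush_Word_cons[OF lx, of r'] hz by (intro bexI[of _ "Word r'"]) auto
        next
          case False
          have m0: "m \<noteq> 0" using hz(1) zm by auto
          have am: "a * m \<noteq> 1" using nu Inr by auto
          have "reduced (Inr m # r')" using hz zm m0 False by (auto simp: reduced_Cons)
          then show ?thesis using Inr zm hz(1) am lx
            by (intro bexI[of _ "Word (Inr m # r')"]) auto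
        qed
      qed
      then obtain t where t: "t \<in> zfp_carrier" "zpush x t = Word (z # r')" by blast
      have "zfp_mult (Word (p @ [x])) t = e"
        using t 2(1) foldr_zpush_Word[OF 2(3)] by simp
      then show ?thesis using t(1) unfolding rideal_def by blast
    qed
  qed
qed

lemma lemD:
  assumes nM: "(0::'a::{monoid_mult,mult_zero}) \<noteq> 1" and nN: "(0::'b::{monoid_mult,mult_zero}) \<noteq> 1"
    and r: "reduced (p @ [x])" and u: "unitl (x::'a + 'b)"
  shows "rid (Word (p @ [x])) = rid (Word p)"
proof
  have rp: "reduced p" and lx: "letter_ok x" using r by (auto simp: reduced_append)
  have e1: "Word (p @ [x]) = zfp_mult (Word p) (Word [x])"
    using foldr_zpush_Word[OF r] by simp
  show "rid (Word (p @ [x])) \<subseteq> rid (Word p)"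
    unfolding e1 by (rule rid_mult_sub) (use rp lx in auto)
  obtain x' where lx': "letter_ok x'" and xx: "zpush x (Word [x']) = Word []"
  proof (cases x)
    case (Inl a)
    then obtain c where ac: "a * c = 1" using u by auto
    have "c \<noteq> 0" using ac nM by auto
    moreover have "c \<noteq> 1" using ac lx Inl by auto
    ultimately show ?thesis using that[of "Inl c"] Inl ac lx nM[symmetric] by auto
  next
    case (Inr a)
    then obtain c where ac: "a * c = 1" using u by auto
    have "c \<noteq> 0" using ac nN by auto
    moreover have "c \<noteq> 1" using ac lx Inr by auto
    ultimately show ?thesis using that[of "Inr c"] Inr ac lx nN[symmetric] by auto
  qed
  have e2: "Word p = zfp_mult (Word (p @ [x])) (Word [x'])"
    using xx foldr_zpush_Word[of p "[]"] rp by simp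
  show "rid (Word p) \<subseteq> rid (Word (p @ [x]))"
    unfolding e2 by (rule rid_mult_sub) (use r lx' in auto)
qed

lemma strip:
  assumes nM: "(0::'a::{monoid_mult,mult_zero}) \<noteq> 1" and nN: "(0::'b::{monoid_mult,mult_zero}) \<noteq> 1"
  shows "reduced (u::('a+'b) list) \<Longrightarrow> \<exists>u'. reduced u' \<and> rid (Word u) = rid (Word u') \<and>
            (u' = [] \<or> (\<exists>p x. u' = p @ [x] \<and> \<not> unitl x))"
proof (induction u rule: rev_induct)
  case Nil then show ?case by blast
next
  case (snoc x p)
  show ?case
  proof (cases "unitl x")
    case True
    have rp: "reduced p" using snoc.prems by (auto simp: reduced_append)
    then show ?thesis using snoc.IH lemD[OF nM nN snoc.prems True] by metis
  next
    case False then show ?thesis using snoc.prems by blast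
  qed
qed




lemma list_pre: "p @ z # r = q @ w \<Longrightarrow> length p < length q \<Longrightarrow> \<exists>q2. q = p @ z # q2"
proof -
  assume e: "p @ z # r = q @ w" and l: "length p < length q"
  from e obtain us where "(p = q @ us \<and> us @ z # r = w) \<or> (p @ us = q \<and> z # r = us @ w)"
    by (auto simp: append_eq_append_conv2)
  then show ?thesis
  proof
    assume "p = q @ us \<and> us @ z # r = w" then show ?thesis using l by auto
  next
    assume h: "p @ us = q \<and> z # r = us @ w"
    then have "us \<noteq> []" using l by auto
    then obtain u us' where "us = u # us'" by (cases us) auto
    then show ?thesis using h by auto
  qed
qed

lemma F_same: "F p C1 \<inter> F p C2 = F p (C1 \<inter> C2)"
  by (auto simp: F_def)

lemma F_lt_sub:
  assumes "q = p @ z # q2" "z \<in> X"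
  shows "F q Y \<subseteq> F p X"
  using assms by (auto simp: F_def)

lemma F_lt0:
  assumes l: "length p < length q" and n: "\<not> (\<exists>z q2. q = p @ z # q2 \<and> z \<in> X)"
  shows "F p X \<inter> F q Y = {Zero}"
proof -
  have "False" if "p @ z # r = q @ z' # r'" "z \<in> X" for z r z' r'
    using list_pre[OF that(1) l] n that by auto
  then show ?thesis by (auto simp: F_def)
qed

lemma F_eq0:
  assumes l: "length p = length q" and n: "p \<noteq> q"
  shows "F p X \<inter> F q Y = {Zero}"
  using assms by (auto simp: F_def)

lemma F_empty: "F p {} = {Zero}" by (auto simp: F_def)

lemma F_Union: "F p (\<Union>i\<in>R. C i) = insert Zero (\<Union>i\<in>R. F p (C i))"
  by (auto simp: F_def)

lemma F_Inl0: "F p (Inl ` rideal UNIV (*) 0) = {Zero}"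
  by (auto simp: F_def rideal_UNIV_iff reduced_append reduced_Cons)
lemma F_Inr0: "F p (Inr ` rideal UNIV (*) 0) = {Zero}"
  by (auto simp: F_def rideal_UNIV_iff reduced_append reduced_Cons)

lemma lideal_inter_diff: "isl x \<noteq> isl y \<Longrightarrow> lideal x \<inter> lideal y = {}"
  by (cases x; cases y) auto

lemma Inl_inter: "Inl ` A \<inter> Inl ` B = Inl ` (A \<inter> B)" by auto
lemma Inr_inter: "Inr ` A \<inter> Inr ` B = Inr ` (A \<inter> B)" by auto

definition STRUCT_concl :: "('a::{monoid_mult,mult_zero},'b::{monoid_mult,mult_zero}) zfp set \<Rightarrow> bool" where
  "STRUCT_concl I \<longleftrightarrow> I = {Zero} \<or> (\<exists>v\<in>zfp_carrier. v \<noteq> Zero \<and> I = rid v) \<or>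
     (\<exists>p a b. reduced (p @ [Inl a]) \<and> \<not>(\<exists>c. a*c=1) \<and> I = F p (Inl ` (rideal UNIV (*) a \<inter> rideal UNIV (*) b))) \<or>
     (\<exists>p a b. reduced (p @ [Inr a]) \<and> \<not>(\<exists>c. a*c=1) \<and> I = F p (Inr ` (rideal UNIV (*) a \<inter> rideal UNIV (*) b)))"

lemma CORE_lt:
  assumes rp: "reduced (p @ [x])" and rq: "reduced (q @ [y])" and nx: "\<not> unitl x" and ny: "\<not> unitl y"
    and l: "length p < length q"
  shows "STRUCT_concl (F p (lideal x) \<inter> F q (lideal y))"
proof (cases "\<exists>z q2. q = p @ z # q2 \<and> z \<in> lideal x")
  case True
  then obtain z q2 where "q = p @ z # q2" "z \<in> lideal x" by blast
  then have "F p (lideal x) \<inter> F q (lideal y) = F q (lideal y)" using F_lt_sub by blast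
  also have "\<dots> = rid (Word (q @ [y]))" using lemA[OF rq ny] by simp
  finally show ?thesis unfolding STRUCT_concl_def using rq by auto
next
  case False
  then show ?thesis unfolding STRUCT_concl_def using F_lt0[OF l] by blast
qed

lemma CORE:
  assumes rp: "reduced (p @ [x])" and rq: "reduced (q @ [y])" and nx: "\<not> unitl x" and ny: "\<not> unitl y"
  shows "STRUCT_concl (F p (lideal x) \<inter> F q (lideal y))"
proof -
  consider "length p < length q" | "length q < length p" | "length p = length q" by linarith
  then show ?thesis
  proof cases
    case 1 then show ?thesis using CORE_lt[OF rp rq nx ny] by blast
  next
    case 2 then show ?thesis using CORE_lt[OF rq rp ny nx] by (simp add: Int_commute)
  next
    case 3
    show ?thesis
    proof (cases "p = q")
      case False then show ?thesis unfolding STRUCT_concl_def using F_eq0[OF 3] by blast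
    next
      case True
      then have e: "F p (lideal x) \<inter> F q (lideal y) = F p (lideal x \<inter> lideal y)" using F_same by simp
      show ?thesis
      proof (cases "isl x = isl y")
        case False
        then show ?thesis unfolding STRUCT_concl_def e using lideal_inter_diff F_empty by metis
      next
        case True
        then show ?thesis
        proof (cases x; cases y)
          fix a b assume xa: "x = Inl a" and yb: "y = Inl b"
          have "F p (lideal x) \<inter> F q (lideal y) = F p (Inl ` (rideal UNIV (*) a \<inter> rideal UNIV (*) b))"
            using e xa yb by (simp add: Inl_inter)
          moreover have "\<not>(\<exists>c. a*c=1)" using nx xa by simp
          moreover have "reduced (p @ [Inl a])" using rp xa by simp
          ultimately show ?thesis unfolding STRUCT_concl_def by blast
        next
          fix a b assume xa: "x = Inr a" and yb: "y = Inr b"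
          have "F p (lideal x) \<inter> F q (lideal y) = F p (Inr ` (rideal UNIV (*) a \<inter> rideal UNIV (*) b))"
            using e xa yb by (simp add: Inr_inter)
          moreover have "\<not>(\<exists>c. a*c=1)" using nx xa by simp
          moreover have "reduced (p @ [Inr a])" using rp xa by simp
          ultimately show ?thesis unfolding STRUCT_concl_def by blast
        qed (use True in auto)
      qed
    qed
  qed
qed

lemma STRUCT:
  assumes nM: "(0::'a::{monoid_mult,mult_zero}) \<noteq> 1" and nN: "(0::'b::{monoid_mult,mult_zero}) \<noteq> 1"
    and s: "s \<in> zfp_carrier" and t: "(t::('a,'b) zfp) \<in> zfp_carrier"
  shows "STRUCT_concl (rid s \<inter> rid t)"
proof -
  show ?thesis
  proof (cases "s = Zero \<or> t = Zero")
    case True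
    then have "rid s \<inter> rid t = {Zero}" using rid_Zero Zero_in_rid s t by auto
    then show ?thesis by (simp add: STRUCT_concl_def)
  next
    case False
    then obtain u v where su: "s = Word u" "reduced u" and tv: "t = Word v" "reduced v"
      using carrier_cases[OF s] carrier_cases[OF t] by auto
    obtain u' where u': "reduced u'" "rid s = rid (Word u')" "u' = [] \<or> (\<exists>p x. u' = p @ [x] \<and> \<not> unitl x)"
      using strip[OF nM nN su(2)] su(1) by blast
    obtain v' where v': "reduced v'" "rid t = rid (Word v')" "v' = [] \<or> (\<exists>p x. v' = p @ [x] \<and> \<not> unitl x)"
      using strip[OF nM nN tv(2)] tv(1) by blast
    show ?thesis
    proof (cases "u' = []")
      case True
      then have "rid s \<inter> rid t = rid t" using u'(2) rid_one rid_sub[OF t] by auto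
      then show ?thesis unfolding STRUCT_concl_def using t tv by auto
    next
      case False
      show ?thesis
      proof (cases "v' = []")
        case True
        then have "rid s \<inter> rid t = rid s" using v'(2) rid_one rid_sub[OF s] by auto
        then show ?thesis unfolding STRUCT_concl_def using s su by auto
      next
        case False
        obtain p x where px: "u' = p @ [x]" "\<not> unitl x" using u'(3) \<open>u' \<noteq> []\<close> by blast
        obtain q y where qy: "v' = q @ [y]" "\<not> unitl y" using v'(3) False by blast
        have "rid s \<inter> rid t = F p (lideal x) \<inter> F q (lideal y)"
          using u'(1,2) v'(1,2) px qy lemA by metis
        then show ?thesis using CORE u'(1) v'(1) px qy by metis
      qed
    qed
  qed
qed




lemma F_Inl_single0: "F p (Inl ` {0}) = {Zero}"
  by (auto simp: F_def reduced_append reduced_Cons)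
lemma F_Inr_single0: "F p (Inr ` {0}) = {Zero}"
  by (auto simp: F_def reduced_append reduced_Cons)

lemma sub_Inl:
  assumes rp: "reduced (p @ [Inl a])" and na: "\<not>(\<exists>d. a*d=1)"
    and c: "c \<in> rideal UNIV (*) a" and c0: "c \<noteq> 0"
  shows "reduced (p @ [Inl c]) \<and> rid (Word (p @ [Inl c])) = F p (Inl ` rideal UNIV (*) c)"
proof -
  obtain m where cm: "c = a * m" using c by (auto simp: rideal_UNIV_iff)
  have nc: "\<not>(\<exists>d. c*d=1)" using na cm by (metis mult.assoc)
  have c1: "c \<noteq> 1" using nc by (metis mult_1_left)
  have r: "reduced (p @ [Inl c])" using rp c0 c1 by (auto simp: reduced_append)
  show ?thesis using r lemA[OF r] nc by simp
qed

lemma sub_Inr: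
  assumes rp: "reduced (p @ [Inr a])" and na: "\<not>(\<exists>d. a*d=1)"
    and c: "c \<in> rideal UNIV (*) a" and c0: "c \<noteq> 0"
  shows "reduced (p @ [Inr c]) \<and> rid (Word (p @ [Inr c])) = F p (Inr ` rideal UNIV (*) c)"
proof -
  obtain m where cm: "c = a * m" using c by (auto simp: rideal_UNIV_iff)
  have nc: "\<not>(\<exists>d. c*d=1)" using na cm by (metis mult.assoc)
  have c1: "c \<noteq> 1" using nc by (metis mult_1_left)
  have r: "reduced (p @ [Inr c])" using rp c0 c1 by (auto simp: reduced_append)
  show ?thesis using r lemA[OF r] nc by simp
qed

lemma rideal_sub_trans: "c \<in> rideal UNIV (*) a \<Longrightarrow> rideal UNIV (*) c \<subseteq> rideal UNIV (*) (a::'a::monoid_mult)"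
  by (auto simp: rideal_UNIV_iff mult.assoc)

lemma rideal0: "rideal UNIV (*) (0::'a::{monoid_mult,mult_zero}) = {0}"
  by (auto simp: rideal_UNIV_iff)

lemma lcm_Inl:
  assumes lcm: "admits_lcm (UNIV::'a set) (*)"
    and rp: "reduced (p @ [Inl (a::'a::{monoid_mult,mult_zero})])" and na: "\<not>(\<exists>d. a*d=1)"
  shows "\<exists>r\<in>zfp_carrier. F p (Inl ` (rideal UNIV (*) a \<inter> rideal UNIV (*) b)) = rid (r::('a,'b::{monoid_mult,mult_zero}) zfp)"
proof -
  obtain c where c: "rideal UNIV (*) a \<inter> rideal UNIV (*) b = rideal UNIV (*) c"
    using lcm unfolding admits_lcm_def by blast
  show ?thesis
  proof (cases "c = 0")
    case True
    then show ?thesis using c rideal0 F_Inl_single0 rid_Zero by (metis Zero_in_carrier)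
  next
    case False
    have "c \<in> rideal UNIV (*) a" using c self_in_rideal by blast
    from sub_Inl[OF rp na this False] show ?thesis using c by (intro bexI[of _ "Word (p @ [Inl c])"]) auto
  qed
qed

lemma lcm_Inr:
  assumes lcm: "admits_lcm (UNIV::'b set) (*)"
    and rp: "reduced (p @ [Inr (a::'b::{monoid_mult,mult_zero})])" and na: "\<not>(\<exists>d. a*d=1)"
  shows "\<exists>r\<in>zfp_carrier. F p (Inr ` (rideal UNIV (*) a \<inter> rideal UNIV (*) b)) = rid (r::('a::{monoid_mult,mult_zero},'b) zfp)"
proof -
  obtain c where c: "rideal UNIV (*) a \<inter> rideal UNIV (*) b = rideal UNIV (*) c"
    using lcm unfolding admits_lcm_def by blast
  show ?thesis
  proof (cases "c = 0")
    case True
    then show ?thesis using c rideal0 F_Inr_single0 rid_Zero by (metis Zero_in_carrier)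
  next
    case False
    have "c \<in> rideal UNIV (*) a" using c self_in_rideal by blast
    from sub_Inr[OF rp na this False] show ?thesis using c by (intro bexI[of _ "Word (p @ [Inr c])"]) auto
  qed
qed

lemma zfp_lcm:
  assumes nM: "(0::'a::{monoid_mult,mult_zero}) \<noteq> 1" and nN: "(0::'b::{monoid_mult,mult_zero}) \<noteq> 1"
    and lM: "admits_lcm (UNIV::'a set) (*)" and lN: "admits_lcm (UNIV::'b set) (*)"
  shows "admits_lcm (zfp_carrier::('a,'b) zfp set) zfp_mult"
  unfolding admits_lcm_def
proof (intro ballI)
  fix s t :: "('a,'b) zfp" assume s: "s \<in> zfp_carrier" and t: "t \<in> zfp_carrier"
  have "STRUCT_concl (rid s \<inter> rid t)" using STRUCT[OF nM nN s t] .
  then show "\<exists>r\<in>zfp_carrier. rid s \<inter> rid t = rid r"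
    unfolding STRUCT_concl_def
    using lcm_Inl[OF lM] lcm_Inr[OF lN] rid_Zero Zero_in_carrier by metis
qed

lemma fa_Inl:
  assumes fa: "finitely_aligned (UNIV::'a set) (*)"
    and rp: "reduced (p @ [Inl (a::'a::{monoid_mult,mult_zero})])" and na: "\<not>(\<exists>d. a*d=1)"
  shows "\<exists>R. R \<subseteq> zfp_carrier \<and> finite R \<and>
    F p (Inl ` (rideal UNIV (*) a \<inter> rideal UNIV (*) b)) = (\<Union>r\<in>R. rid (r::('a,'b::{monoid_mult,mult_zero}) zfp))"
proof -
  obtain R where R: "finite R" "rideal UNIV (*) a \<inter> rideal UNIV (*) b = (\<Union>r\<in>R. rideal UNIV (*) r)"
  proof -
    have "\<exists>R. R \<subseteq> UNIV \<and> finite R \<and> rideal UNIV (*) a \<inter> rideal UNIV (*) b = (\<Union>r\<in>R. rideal UNIV (*) r)"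
      using fa unfolding finitely_aligned_def by simp
    then show ?thesis using that by blast
  qed
  let ?f = "\<lambda>r. Word (p @ [Inl r]) :: ('a,'b) zfp"
  have sub: "\<And>r. r \<in> R \<Longrightarrow> r \<noteq> 0 \<Longrightarrow> reduced (p @ [Inl r]) \<and> rid (?f r) = F p (Inl ` rideal UNIV (*) r)"
  proof -
    fix r assume "r \<in> R" "r \<noteq> 0"
    then have "r \<in> (\<Union>r\<in>R. rideal UNIV (*) r)" using self_in_rideal[of r] by blast
    then have "r \<in> rideal UNIV (*) a" unfolding R(2)[symmetric] by simp
    then show "reduced (p @ [Inl r]) \<and> rid (?f r) = F p (Inl ` rideal UNIV (*) r)"
      by (rule sub_Inl[OF rp na _ \<open>r \<noteq> 0\<close>])
  qed
  have "F p (Inl ` (rideal UNIV (*) a \<inter> rideal UNIV (*) b)) = insert Zero (\<Union>r\<in>R. F p (Inl ` rideal UNIV (*) r))"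
    unfolding R(2) image_UN F_Union ..
  also have "\<dots> = (\<Union>r\<in>insert Zero (?f ` (R - {0})). rid r)"
  proof -
    have "(\<Union>r\<in>R. F p (Inl ` rideal UNIV (*) r)) \<subseteq> insert Zero (\<Union>r\<in>R - {0}. F p (Inl ` rideal UNIV (*) r))"
      using F_Inl0 by auto
    have "insert Zero (\<Union>r\<in>R. F p (Inl ` rideal UNIV (*) r)) = insert Zero (\<Union>r\<in>R - {0}. rid (?f r))"
    proof -
      have "(\<Union>r\<in>R - {0}. rid (?f r)) = (\<Union>r\<in>R - {0}. F p (Inl ` rideal UNIV (*) r))"
        using sub by (intro SUP_cong) auto
      moreover have "(\<Union>r\<in>R - {0}. F p (Inl ` rideal UNIV (*) r)) \<subseteq> (\<Union>r\<in>R. F p (Inl ` rideal UNIV (*) r))"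
        by auto
      ultimately show ?thesis using \<open>(\<Union>r\<in>R. F p (Inl ` rideal UNIV (*) r)) \<subseteq> _\<close> by auto
    qed
    then show ?thesis by (simp add: rid_Zero)
  qed
  finally have eq: "F p (Inl ` (rideal UNIV (*) a \<inter> rideal UNIV (*) b)) = (\<Union>r\<in>insert Zero (?f ` (R - {0})). rid r)" .
  have sub': "\<And>r. r \<in> R \<Longrightarrow> r \<noteq> 0 \<Longrightarrow> reduced (p @ [Inl r])" using sub by blast
  have c: "insert Zero (?f ` (R - {0})) \<subseteq> zfp_carrier" by (auto intro: sub')
  have f: "finite (insert Zero (?f ` (R - {0})))" using R(1) by simp
  show ?thesis using eq c f by blast
qed

lemma fa_Inr:
  assumes fa: "finitely_aligned (UNIV::'b set) (*)"
    and rp: "reduced (p @ [Inr (a::'b::{monoid_mult,mult_zero})])" and na: "\<not>(\<exists>d. a*d=1)"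
  shows "\<exists>R. R \<subseteq> zfp_carrier \<and> finite R \<and>
    F p (Inr ` (rideal UNIV (*) a \<inter> rideal UNIV (*) b)) = (\<Union>r\<in>R. rid (r::('a::{monoid_mult,mult_zero},'b) zfp))"
proof -
  obtain R where R: "finite R" "rideal UNIV (*) a \<inter> rideal UNIV (*) b = (\<Union>r\<in>R. rideal UNIV (*) r)"
  proof -
    have "\<exists>R. R \<subseteq> UNIV \<and> finite R \<and> rideal UNIV (*) a \<inter> rideal UNIV (*) b = (\<Union>r\<in>R. rideal UNIV (*) r)"
      using fa unfolding finitely_aligned_def by simp
    then show ?thesis using that by blast
  qed
  let ?f = "\<lambda>r. Word (p @ [Inr r]) :: ('a,'b) zfp"
  have sub: "\<And>r. r \<in> R \<Longrightarrow> r \<noteq> 0 \<Longrightarrow> reduced (p @ [Inr r]) \<and> rid (?f r) = F p (Inr ` rideal UNIV (*) r)"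
  proof -
    fix r assume "r \<in> R" "r \<noteq> 0"
    then have "r \<in> (\<Union>r\<in>R. rideal UNIV (*) r)" using self_in_rideal[of r] by blast
    then have "r \<in> rideal UNIV (*) a" unfolding R(2)[symmetric] by simp
    then show "reduced (p @ [Inr r]) \<and> rid (?f r) = F p (Inr ` rideal UNIV (*) r)"
      by (rule sub_Inr[OF rp na _ \<open>r \<noteq> 0\<close>])
  qed
  have "F p (Inr ` (rideal UNIV (*) a \<inter> rideal UNIV (*) b)) = insert Zero (\<Union>r\<in>R. F p (Inr ` rideal UNIV (*) r))"
    unfolding R(2) image_UN F_Union ..
  also have "\<dots> = (\<Union>r\<in>insert Zero (?f ` (R - {0})). rid r)"
  proof -
    have "(\<Union>r\<in>R. F p (Inr ` rideal UNIV (*) r)) \<subseteq> insert Zero (\<Union>r\<in>R - {0}. F p (Inr ` rideal UNIV (*) r))"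
      using F_Inr0 by auto
    have "insert Zero (\<Union>r\<in>R. F p (Inr ` rideal UNIV (*) r)) = insert Zero (\<Union>r\<in>R - {0}. rid (?f r))"
    proof -
      have "(\<Union>r\<in>R - {0}. rid (?f r)) = (\<Union>r\<in>R - {0}. F p (Inr ` rideal UNIV (*) r))"
        using sub by (intro SUP_cong) auto
      moreover have "(\<Union>r\<in>R - {0}. F p (Inr ` rideal UNIV (*) r)) \<subseteq> (\<Union>r\<in>R. F p (Inr ` rideal UNIV (*) r))"
        by auto
      ultimately show ?thesis using \<open>(\<Union>r\<in>R. F p (Inr ` rideal UNIV (*) r)) \<subseteq> _\<close> by auto
    qed
    then show ?thesis by (simp add: rid_Zero)
  qed
  finally have eq: "F p (Inr ` (rideal UNIV (*) a \<inter> rideal UNIV (*) b)) = (\<Union>r\<in>insert Zero (?f ` (R - {0})). rid r)" .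
  have sub': "\<And>r. r \<in> R \<Longrightarrow> r \<noteq> 0 \<Longrightarrow> reduced (p @ [Inr r])" using sub by blast
  have c: "insert Zero (?f ` (R - {0})) \<subseteq> zfp_carrier" by (auto intro: sub')
  have f: "finite (insert Zero (?f ` (R - {0})))" using R(1) by simp
  show ?thesis using eq c f by blast
qed

lemma zfp_fa:
  assumes nM: "(0::'a::{monoid_mult,mult_zero}) \<noteq> 1" and nN: "(0::'b::{monoid_mult,mult_zero}) \<noteq> 1"
    and lM: "finitely_aligned (UNIV::'a set) (*)" and lN: "finitely_aligned (UNIV::'b set) (*)"
  shows "finitely_aligned (zfp_carrier::('a,'b) zfp set) zfp_mult"
  unfolding finitely_aligned_def
proof (intro ballI)
  fix s t :: "('a,'b) zfp" assume s: "s \<in> zfp_carrier" and t: "t \<in> zfp_carrier"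
  have "STRUCT_concl (rid s \<inter> rid t)" using STRUCT[OF nM nN s t] .
  then consider "rid s \<inter> rid t = {Zero}" | v where "v \<in> zfp_carrier" "rid s \<inter> rid t = rid v"
    | p a b where "reduced (p @ [Inl a])" "\<not>(\<exists>c. a*c=1)" "rid s \<inter> rid t = F p (Inl ` (rideal UNIV (*) a \<inter> rideal UNIV (*) b))"
    | p a b where "reduced (p @ [Inr a])" "\<not>(\<exists>c. a*c=1)" "rid s \<inter> rid t = F p (Inr ` (rideal UNIV (*) a \<inter> rideal UNIV (*) b))"
    unfolding STRUCT_concl_def by blast
  then show "\<exists>R. R \<subseteq> zfp_carrier \<and> finite R \<and> rid s \<inter> rid t = (\<Union>r\<in>R. rid r)"
  proof cases
    case 1 then show ?thesis using rid_Zero by (intro exI[of _ "{Zero}"]) auto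
  next
    case 2 then show ?thesis by (intro exI[of _ "{v}"]) auto
  next
    case 3 then show ?thesis using fa_Inl[OF lM 3(1,2), of b] by simp
  next
    case 4 then show ?thesis using fa_Inr[OF lN 4(1,2), of b] by simp
  qed
qed

lemma sfa_Inl:
  assumes sfa: "strongly_finitely_aligned (UNIV::'a set) (*) 0"
    and rp: "reduced (p @ [Inl (a::'a::{monoid_mult,mult_zero})])" and na: "\<not>(\<exists>d. a*d=1)"
  shows "\<exists>B'. B' \<subseteq> zfp_carrier - {Zero} \<and> finite B' \<and>
    F p (Inl ` (rideal UNIV (*) a \<inter> rideal UNIV (*) b)) = (if B' = {} then {Zero} else (\<Union>r\<in>B'. rid (r::('a,'b::{monoid_mult,mult_zero}) zfp))) \<and>
    (\<forall>r\<in>B'. \<forall>r'\<in>B'. r \<noteq> r' \<longrightarrow> rid r \<inter> rid r' = {Zero})"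
proof -
  obtain B where B: "B \<subseteq> UNIV - {0}" "finite B"
    "rideal UNIV (*) a \<inter> rideal UNIV (*) b = (if B = {} then {0} else (\<Union>r\<in>B. rideal UNIV (*) r))"
    "\<forall>r\<in>B. \<forall>r'\<in>B. r \<noteq> r' \<longrightarrow> rideal UNIV (*) r \<inter> rideal UNIV (*) r' = {0}"
  proof -
    have "\<exists>B. B \<subseteq> UNIV - {0} \<and> finite B \<and>
      rideal UNIV (*) a \<inter> rideal UNIV (*) b = (if B = {} then {0} else (\<Union>r\<in>B. rideal UNIV (*) r)) \<and>
      (\<forall>r\<in>B. \<forall>r'\<in>B. r \<noteq> r' \<longrightarrow> rideal UNIV (*) r \<inter> rideal UNIV (*) r' = {0})"
      using sfa unfolding strongly_finitely_aligned_def by simp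
    then show ?thesis using that by blast
  qed
  let ?f = "\<lambda>r. Word (p @ [Inl r]) :: ('a,'b) zfp"
  show ?thesis
  proof (cases "B = {}")
    case True
    have "F p (Inl ` (rideal UNIV (*) a \<inter> rideal UNIV (*) b)) = {Zero}"
      unfolding B(3) using True F_Inl_single0 by simp
    then show ?thesis by (intro exI[of _ "{}"]) simp
  next
    case False
    have sub: "\<And>r. r \<in> B \<Longrightarrow> reduced (p @ [Inl r]) \<and> rid (?f r) = F p (Inl ` rideal UNIV (*) r)"
    proof -
      fix r assume r: "r \<in> B"
      then have r0: "r \<noteq> 0" using B(1) by auto
      from r have "r \<in> (\<Union>r\<in>B. rideal UNIV (*) r)" using self_in_rideal[of r] by blast
      then have "r \<in> rideal UNIV (*) a" using B(3) False by auto
      then show "reduced (p @ [Inl r]) \<and> rid (?f r) = F p (Inl ` rideal UNIV (*) r)"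
        by (rule sub_Inl[OF rp na _ r0])
    qed
    have sub': "\<And>r. r \<in> B \<Longrightarrow> reduced (p @ [Inl r])" using sub by blast
    have sub'': "\<And>r. r \<in> B \<Longrightarrow> rid (?f r) = F p (Inl ` rideal UNIV (*) r)" using sub by blast
    have "F p (Inl ` (rideal UNIV (*) a \<inter> rideal UNIV (*) b)) = insert Zero (\<Union>r\<in>B. F p (Inl ` rideal UNIV (*) r))"
      unfolding B(3) using False by (simp add: image_UN F_Union)
    also have "\<dots> = (\<Union>r\<in>B. F p (Inl ` rideal UNIV (*) r))"
      using False by (auto simp: F_def)
    also have "\<dots> = (\<Union>r\<in>B. rid (?f r))"
      using sub'' by (intro SUP_cong) auto
    also have "\<dots> = (\<Union>r\<in>?f ` B. rid r)" by simp
    finally have eq: "F p (Inl ` (rideal UNIV (*) a \<inter> rideal UNIV (*) b)) = (\<Union>r\<in>?f ` B. rid r)" .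
    have c: "?f ` B \<subseteq> zfp_carrier - {Zero}" by (auto intro: sub')
    have f: "finite (?f ` B)" using B(2) by simp
    have ne: "?f ` B \<noteq> {}" using False by simp
    have pw: "\<forall>r\<in>?f ` B. \<forall>r'\<in>?f ` B. r \<noteq> r' \<longrightarrow> rid r \<inter> rid r' = {Zero}"
    proof (intro ballI impI)
      fix e e' assume e: "e \<in> ?f ` B" and e': "e' \<in> ?f ` B" and ne: "e \<noteq> e'"
      then obtain r r' where rr: "r \<in> B" "r' \<in> B" "e = ?f r" "e' = ?f r'" by blast
      then have "r \<noteq> r'" using ne by auto
      then have z: "rideal UNIV (*) r \<inter> rideal UNIV (*) r' = {0}" using B(4) rr by blast
      have "rid e \<inter> rid e' = F p (Inl ` rideal UNIV (*) r) \<inter> F p (Inl ` rideal UNIV (*) r')"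
        using sub'' rr by simp
      also have "\<dots> = F p (Inl ` {0})" by (simp add: F_same Inl_inter z)
      also have "\<dots> = {Zero}" by (rule F_Inl_single0)
      finally show "rid e \<inter> rid e' = {Zero}" .
    qed
    show ?thesis using eq c f ne pw by (intro exI[of _ "?f ` B"]) simp
  qed
qed

lemma sfa_Inr:
  assumes sfa: "strongly_finitely_aligned (UNIV::'b set) (*) 0"
    and rp: "reduced (p @ [Inr (a::'b::{monoid_mult,mult_zero})])" and na: "\<not>(\<exists>d. a*d=1)"
  shows "\<exists>B'. B' \<subseteq> zfp_carrier - {Zero} \<and> finite B' \<and>
    F p (Inr ` (rideal UNIV (*) a \<inter> rideal UNIV (*) b)) = (if B' = {} then {Zero} else (\<Union>r\<in>B'. rid (r::('a::{monoid_mult,mult_zero},'b) zfp))) \<and>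
    (\<forall>r\<in>B'. \<forall>r'\<in>B'. r \<noteq> r' \<longrightarrow> rid r \<inter> rid r' = {Zero})"
proof -
  obtain B where B: "B \<subseteq> UNIV - {0}" "finite B"
    "rideal UNIV (*) a \<inter> rideal UNIV (*) b = (if B = {} then {0} else (\<Union>r\<in>B. rideal UNIV (*) r))"
    "\<forall>r\<in>B. \<forall>r'\<in>B. r \<noteq> r' \<longrightarrow> rideal UNIV (*) r \<inter> rideal UNIV (*) r' = {0}"
  proof -
    have "\<exists>B. B \<subseteq> UNIV - {0} \<and> finite B \<and>
      rideal UNIV (*) a \<inter> rideal UNIV (*) b = (if B = {} then {0} else (\<Union>r\<in>B. rideal UNIV (*) r)) \<and>
      (\<forall>r\<in>B. \<forall>r'\<in>B. r \<noteq> r' \<longrightarrow> rideal UNIV (*) r \<inter> rideal UNIV (*) r' = {0})"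
      using sfa unfolding strongly_finitely_aligned_def by simp
    then show ?thesis using that by blast
  qed
  let ?f = "\<lambda>r. Word (p @ [Inr r]) :: ('a,'b) zfp"
  show ?thesis
  proof (cases "B = {}")
    case True
    have "F p (Inr ` (rideal UNIV (*) a \<inter> rideal UNIV (*) b)) = {Zero}"
      unfolding B(3) using True F_Inr_single0 by simp
    then show ?thesis by (intro exI[of _ "{}"]) simp
  next
    case False
    have sub: "\<And>r. r \<in> B \<Longrightarrow> reduced (p @ [Inr r]) \<and> rid (?f r) = F p (Inr ` rideal UNIV (*) r)"
    proof -
      fix r assume r: "r \<in> B"
      then have r0: "r \<noteq> 0" using B(1) by auto
      from r have "r \<in> (\<Union>r\<in>B. rideal UNIV (*) r)" using self_in_rideal[of r] by blast
      then have "r \<in> rideal UNIV (*) a" using B(3) False by auto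
      then show "reduced (p @ [Inr r]) \<and> rid (?f r) = F p (Inr ` rideal UNIV (*) r)"
        by (rule sub_Inr[OF rp na _ r0])
    qed
    have sub': "\<And>r. r \<in> B \<Longrightarrow> reduced (p @ [Inr r])" using sub by blast
    have sub'': "\<And>r. r \<in> B \<Longrightarrow> rid (?f r) = F p (Inr ` rideal UNIV (*) r)" using sub by blast
    have "F p (Inr ` (rideal UNIV (*) a \<inter> rideal UNIV (*) b)) = insert Zero (\<Union>r\<in>B. F p (Inr ` rideal UNIV (*) r))"
      unfolding B(3) using False by (simp add: image_UN F_Union)
    also have "\<dots> = (\<Union>r\<in>B. F p (Inr ` rideal UNIV (*) r))"
      using False by (auto simp: F_def)
    also have "\<dots> = (\<Union>r\<in>B. rid (?f r))"
      using sub'' by (intro SUP_cong) auto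
    also have "\<dots> = (\<Union>r\<in>?f ` B. rid r)" by simp
    finally have eq: "F p (Inr ` (rideal UNIV (*) a \<inter> rideal UNIV (*) b)) = (\<Union>r\<in>?f ` B. rid r)" .
    have c: "?f ` B \<subseteq> zfp_carrier - {Zero}" by (auto intro: sub')
    have f: "finite (?f ` B)" using B(2) by simp
    have ne: "?f ` B \<noteq> {}" using False by simp
    have pw: "\<forall>r\<in>?f ` B. \<forall>r'\<in>?f ` B. r \<noteq> r' \<longrightarrow> rid r \<inter> rid r' = {Zero}"
    proof (intro ballI impI)
      fix e e' assume e: "e \<in> ?f ` B" and e': "e' \<in> ?f ` B" and ne: "e \<noteq> e'"
      then obtain r r' where rr: "r \<in> B" "r' \<in> B" "e = ?f r" "e' = ?f r'" by blast
      then have "r \<noteq> r'" using ne by auto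
      then have z: "rideal UNIV (*) r \<inter> rideal UNIV (*) r' = {0}" using B(4) rr by blast
      have "rid e \<inter> rid e' = F p (Inr ` rideal UNIV (*) r) \<inter> F p (Inr ` rideal UNIV (*) r')"
        using sub'' rr by simp
      also have "\<dots> = F p (Inr ` {0})" by (simp add: F_same Inr_inter z)
      also have "\<dots> = {Zero}" by (rule F_Inr_single0)
      finally show "rid e \<inter> rid e' = {Zero}" .
    qed
    show ?thesis using eq c f ne pw by (intro exI[of _ "?f ` B"]) simp
  qed
qed

lemma zfp_sfa:
  assumes nM: "(0::'a::{monoid_mult,mult_zero}) \<noteq> 1" and nN: "(0::'b::{monoid_mult,mult_zero}) \<noteq> 1"
    and lM: "strongly_finitely_aligned (UNIV::'a set) (*) 0" and lN: "strongly_finitely_aligned (UNIV::'b set) (*) 0"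
  shows "strongly_finitely_aligned (zfp_carrier::('a,'b) zfp set) zfp_mult Zero"
  unfolding strongly_finitely_aligned_def
proof (intro ballI)
  fix s t :: "('a,'b) zfp" assume s: "s \<in> zfp_carrier" and t: "t \<in> zfp_carrier"
  have "STRUCT_concl (rid s \<inter> rid t)" using STRUCT[OF nM nN s t] .
  then consider "rid s \<inter> rid t = {Zero}" | v where "v \<in> zfp_carrier" "v \<noteq> Zero" "rid s \<inter> rid t = rid v"
    | p a b where "reduced (p @ [Inl a])" "\<not>(\<exists>c. a*c=1)" "rid s \<inter> rid t = F p (Inl ` (rideal UNIV (*) a \<inter> rideal UNIV (*) b))"
    | p a b where "reduced (p @ [Inr a])" "\<not>(\<exists>c. a*c=1)" "rid s \<inter> rid t = F p (Inr ` (rideal UNIV (*) a \<inter> rideal UNIV (*) b))"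
    unfolding STRUCT_concl_def by blast
  then show "\<exists>B. B \<subseteq> zfp_carrier - {Zero} \<and> finite B \<and>
        rid s \<inter> rid t = (if B = {} then {Zero} else (\<Union>b\<in>B. rid b)) \<and>
        (\<forall>b\<in>B. \<forall>b'\<in>B. b \<noteq> b' \<longrightarrow> rid b \<inter> rid b' = {Zero})"
  proof cases
    case 1 then show ?thesis by (intro exI[of _ "{}"]) auto
  next
    case 2 then show ?thesis by (intro exI[of _ "{v}"]) auto
  next
    case 3 then show ?thesis using sfa_Inl[OF lM 3(1,2), of b] by simp
  next
    case 4 then show ?thesis using sfa_Inr[OF lN 4(1,2), of b] by simp
  qed
qed




theorem theorem9p5:
  assumes M_nontriv: "(0::'a::{monoid_mult,mult_zero}) \<noteq> 1"
      and N_nontriv: "(0::'b::{monoid_mult,mult_zero}) \<noteq> 1"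
      and M_zlc: "zero_left_cancellative (UNIV::'a set) (*) 0"
      and N_zlc: "zero_left_cancellative (UNIV::'b set) (*) 0"
  shows
   "(admits_lcm (UNIV::'a set) (*) \<and> admits_lcm (UNIV::'b set) (*) \<longrightarrow>
       monoid0 (zfp_carrier::('a,'b) zfp set) zfp_mult zfp_one Zero \<and>
       zero_left_cancellative (zfp_carrier::('a,'b) zfp set) zfp_mult Zero \<and>
       admits_lcm (zfp_carrier::('a,'b) zfp set) zfp_mult) \<and>
    (finitely_aligned (UNIV::'a set) (*) \<and> finitely_aligned (UNIV::'b set) (*) \<longrightarrow>
       monoid0 (zfp_carrier::('a,'b) zfp set) zfp_mult zfp_one Zero \<and>
       zero_left_cancellative (zfp_carrier::('a,'b) zfp set) zfp_mult Zero \<and>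
       finitely_aligned (zfp_carrier::('a,'b) zfp set) zfp_mult) \<and>
    (strongly_finitely_aligned (UNIV::'a set) (*) 0 \<and> strongly_finitely_aligned (UNIV::'b set) (*) 0 \<longrightarrow>
       monoid0 (zfp_carrier::('a,'b) zfp set) zfp_mult zfp_one Zero \<and>
       zero_left_cancellative (zfp_carrier::('a,'b) zfp set) zfp_mult Zero \<and>
       strongly_finitely_aligned (zfp_carrier::('a,'b) zfp set) zfp_mult Zero)"
  using zfp_monoid0 zfp_zlc[OF M_zlc N_zlc] zfp_lcm[OF M_nontriv N_nontriv]
    zfp_fa[OF M_nontriv N_nontriv] zfp_sfa[OF M_nontriv N_nontriv] by blast

end
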